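(* Let $a=\sum_{t=0}^7a_te_t$ and $b=\sum_{t=0}^7b_te_t$ be nonzero elements of $C\ell_{1,2}$ with $P(a)=P(b)=0$, and let $d\in C\ell_{1,2}$. Then the equation $axb=d$ (in the unknown $x\in C\ell_{1,2}$) is solvable if and only if $$\frac{aa'db'b}{16(a_0^2+a_2^2+a_4^2+a_6^2)(b_0^2+b_2^2+b_4^2+b_6^2)}=d,$$ in which case all the solutions are given by $$x=\frac{a'db'}{16(a_0^2+a_2^2+a_4^2+a_6^2)(b_0^2+b_2^2+b_4^2+b_6^2)}+y-\frac{a'aybb'}{16(a_0^2+a_2^2+a_4^2+a_6^2)(b_0^2+b_2^2+b_4^2+b_6^2)},\qquad y\in C\ell_{1,2}\text{ arbitrary}.$$
   Context: $C\ell_{1,2}$ is the real Clifford algebra generated by $i_1,i_2,i_3$ with $i_1^2=1$, $i_2^2=i_3^2=-1$ and $i_ti_m=-i_mi_t$ for $t\neq m$, with real basis $e_0=1$, $e_1=i_1$, $e_2=i_2$, $e_3=i_1i_2$, $e_4=i_3$, $e_5=i_1i_3$, $e_6=i_2i_3$, $e_7=i_1i_2i_3$. For $a=\sum_{t=0}^7 a_te_t$ ($a_t\in\mathbb{R}$) define: the prime $a'=a_0+a_1e_1-a_2e_2+a_3e_3-a_4e_4+a_5e_5-a_6e_6-a_7e_7$; $N(a)=a_0^2-a_1^2+a_2^2-a_3^2+a_4^2-a_5^2+a_6^2-a_7^2$; $T(a)=a_0a_7+a_2a_5-a_1a_6-a_3a_4$; $P(a)=N(a)^2+4T(a)^2$.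 *)

theory Defs
  imports Complex_Main
begin

text \<open>The real Clifford algebra Cl(1,2), represented by coordinates with respect to the
basis e0 = 1, e1 = i1, e2 = i2, e3 = i1 i2, e4 = i3, e5 = i1 i3, e6 = i2 i3, e7 = i1 i2 i3,
where i1^2 = 1, i2^2 = i3^2 = -1 and the generators anticommute.\<close>

datatype cl12 = Cl (c0: real) (c1: real) (c2: real) (c3: real)
                   (c4: real) (c5: real) (c6: real) (c7: real)

definition cl_zero :: cl12 where
  "cl_zero = Cl 0 0 0 0 0 0 0 0"

definition cl_add :: "cl12 \<Rightarrow> cl12 \<Rightarrow> cl12" where
  "cl_add a b = Cl (c0 a + c0 b) (c1 a + c1 b) (c2 a + c2 b) (c3 a + c3 b)
                   (c4 a + c4 b) (c5 a + c5 b) (c6 a + c6 b) (c7 a + c7 b)"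

definition cl_sub :: "cl12 \<Rightarrow> cl12 \<Rightarrow> cl12" where
  "cl_sub a b = Cl (c0 a - c0 b) (c1 a - c1 b) (c2 a - c2 b) (c3 a - c3 b)
                   (c4 a - c4 b) (c5 a - c5 b) (c6 a - c6 b) (c7 a - c7 b)"

definition cl_scale :: "real \<Rightarrow> cl12 \<Rightarrow> cl12" where
  "cl_scale r a = Cl (r * c0 a) (r * c1 a) (r * c2 a) (r * c3 a)
                     (r * c4 a) (r * c5 a) (r * c6 a) (r * c7 a)"

definition cl_mult :: "cl12 \<Rightarrow> cl12 \<Rightarrow> cl12" where
  "cl_mult a b = Cl
    ( c0 a * c0 b + c1 a * c1 b - c2 a * c2 b + c3 a * c3 b - c4 a * c4 b + c5 a * c5 b - c6 a * c6 b - c7 a * c7 b)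
    ( c0 a * c1 b + c1 a * c0 b + c2 a * c3 b - c3 a * c2 b + c4 a * c5 b - c5 a * c4 b - c6 a * c7 b - c7 a * c6 b)
    ( c0 a * c2 b + c1 a * c3 b + c2 a * c0 b - c3 a * c1 b + c4 a * c6 b - c5 a * c7 b - c6 a * c4 b - c7 a * c5 b)
    ( c0 a * c3 b + c1 a * c2 b - c2 a * c1 b + c3 a * c0 b - c4 a * c7 b + c5 a * c6 b - c6 a * c5 b - c7 a * c4 b)
    ( c0 a * c4 b + c1 a * c5 b - c2 a * c6 b + c3 a * c7 b + c4 a * c0 b - c5 a * c1 b + c6 a * c2 b + c7 a * c3 b)
    ( c0 a * c5 b + c1 a * c4 b + c2 a * c7 b - c3 a * c6 b - c4 a * c1 b + c5 a * c0 b + c6 a * c3 b + c7 a * c2 b)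
    ( c0 a * c6 b + c1 a * c7 b + c2 a * c4 b - c3 a * c5 b - c4 a * c2 b + c5 a * c3 b + c6 a * c0 b + c7 a * c1 b)
    ( c0 a * c7 b + c1 a * c6 b - c2 a * c5 b + c3 a * c4 b + c4 a * c3 b - c5 a * c2 b + c6 a * c1 b + c7 a * c0 b)"

definition cl_prime :: "cl12 \<Rightarrow> cl12" where
  "cl_prime a = Cl (c0 a) (c1 a) (- c2 a) (c3 a) (- c4 a) (c5 a) (- c6 a) (- c7 a)"

definition cl_N :: "cl12 \<Rightarrow> real" where
  "cl_N a = (c0 a)^2 - (c1 a)^2 + (c2 a)^2 - (c3 a)^2 + (c4 a)^2 - (c5 a)^2 + (c6 a)^2 - (c7 a)^2"

definition cl_T :: "cl12 \<Rightarrow> real" where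
  "cl_T a = c0 a * c7 a + c2 a * c5 a - c1 a * c6 a - c3 a * c4 a"

definition cl_P :: "cl12 \<Rightarrow> real" where
  "cl_P a = (cl_N a)^2 + 4 * (cl_T a)^2"

definition cl_Q :: "cl12 \<Rightarrow> real" where
  "cl_Q a = (c0 a)^2 + (c2 a)^2 + (c4 a)^2 + (c6 a)^2"

end

theory Submission imports Defs begin
lemma assoc: "cl_mult (cl_mult a b) c = cl_mult a (cl_mult b c)"
  by (cases a; cases b; cases c) (simp add: cl_mult_def algebra_simps)
lemma key_id: "cl_mult (cl_mult a (cl_prime a)) a =
  Cl (4*cl_Q a*c0 a - 3*c0 a*cl_N a - 2*c7 a*cl_T a)
     (4*cl_Q a*c1 a - 1*c1 a*cl_N a + 2*c6 a*cl_T a)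
     (4*cl_Q a*c2 a - 3*c2 a*cl_N a - 2*c5 a*cl_T a)
     (4*cl_Q a*c3 a - 1*c3 a*cl_N a + 2*c4 a*cl_T a)
     (4*cl_Q a*c4 a - 3*c4 a*cl_N a + 2*c3 a*cl_T a)
     (4*cl_Q a*c5 a - 1*c5 a*cl_N a - 2*c2 a*cl_T a)
     (4*cl_Q a*c6 a - 3*c6 a*cl_N a + 2*c1 a*cl_T a)
     (4*cl_Q a*c7 a - 1*c7 a*cl_N a - 2*c0 a*cl_T a)"
  by (cases a) (simp add: cl_mult_def cl_prime_def cl_Q_def cl_N_def cl_T_def algebra_simps power2_eq_square)
lemma PNT: "cl_P a = 0 \<Longrightarrow> cl_N a = 0 \<and> cl_T a = 0"
proof -
  assume "cl_P a = 0"
  then have "(cl_N a)^2 + (2*cl_T a)^2 = 0" unfolding cl_P_def by (simp add: power_mult_distrib)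
  then show ?thesis by (simp only: sum_power2_eq_zero_iff) simp
qed
lemma key: "cl_P a = 0 \<Longrightarrow> cl_mult (cl_mult a (cl_prime a)) a = cl_scale (4 * cl_Q a) a"
  using PNT[of a] by (cases a) (simp add: key_id cl_scale_def)
lemma Qnz: "a \<noteq> cl_zero \<Longrightarrow> cl_P a = 0 \<Longrightarrow> cl_Q a \<noteq> 0"
proof
  assume h: "a \<noteq> cl_zero" "cl_P a = 0" "cl_Q a = 0"
  then have "cl_N a = 0" using PNT by blast
  with h(3) have "c0 a = 0 \<and> c1 a = 0 \<and> c2 a = 0 \<and> c3 a = 0 \<and> c4 a = 0 \<and> c5 a = 0 \<and> c6 a = 0 \<and> c7 a = 0"
    unfolding cl_Q_def cl_N_def
    by (smt (verit) zero_le_power2 power2_eq_square sum_power2_eq_zero_iff)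
  then show False using h(1) by (cases a) (simp add: cl_zero_def)
qed
lemma ms_l: "cl_mult (cl_scale r a) b = cl_scale r (cl_mult a b)"
  by (simp add: cl_mult_def cl_scale_def algebra_simps)
lemma ms_r: "cl_mult a (cl_scale r b) = cl_scale r (cl_mult a b)"
  by (simp add: cl_mult_def cl_scale_def algebra_simps)
lemma ss: "cl_scale r (cl_scale s a) = cl_scale (r*s) a"
  by (simp add: cl_scale_def algebra_simps)
lemma s1: "cl_scale 1 a = a"
  by (cases a) (simp add: cl_scale_def)
lemma madd_l: "cl_mult (cl_add a b) c = cl_add (cl_mult a c) (cl_mult b c)"
  by (simp add: cl_mult_def cl_add_def algebra_simps)
lemma madd_r: "cl_mult c (cl_add a b) = cl_add (cl_mult c a) (cl_mult c b)"
  by (simp add: cl_mult_def cl_add_def algebra_simps)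
lemma msub_l: "cl_mult (cl_sub a b) c = cl_sub (cl_mult a c) (cl_mult b c)"
  by (simp add: cl_mult_def cl_sub_def algebra_simps)
lemma msub_r: "cl_mult c (cl_sub a b) = cl_sub (cl_mult c a) (cl_mult c b)"
  by (simp add: cl_mult_def cl_sub_def algebra_simps)
lemma addsub: "cl_sub (cl_add u y) y = u" "cl_sub (cl_add u y) u = y"
  by (cases u; cases y; simp add: cl_add_def cl_sub_def)+

theorem theorem4p1:
  fixes a b d :: cl12
  assumes "a \<noteq> cl_zero" and "b \<noteq> cl_zero"
    and "cl_P a = 0" and "cl_P b = 0"
  shows "((\<exists>x. cl_mult (cl_mult a x) b = d) \<longleftrightarrow>
           cl_scale (1 / (16 * cl_Q a * cl_Q b))
             (cl_mult (cl_mult (cl_mult (cl_mult a (cl_prime a)) d) (cl_prime b)) b) = d)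
       \<and> ((\<exists>x. cl_mult (cl_mult a x) b = d) \<longrightarrow>
           {x. cl_mult (cl_mult a x) b = d} =
           {cl_sub (cl_add (cl_scale (1 / (16 * cl_Q a * cl_Q b))
                              (cl_mult (cl_mult (cl_prime a) d) (cl_prime b))) y)
                   (cl_scale (1 / (16 * cl_Q a * cl_Q b))
                      (cl_mult (cl_mult (cl_mult (cl_mult (cl_prime a) a) y) b) (cl_prime b)))
            | y. True})"
proof -
  define k where "k = 1 / (16 * cl_Q a * cl_Q b)"
  have qa: "cl_Q a \<noteq> 0" and qb: "cl_Q b \<noteq> 0" using Qnz assms by auto
  have ka: "k * (4 * cl_Q a * (4 * cl_Q b)) = 1" using qa qb unfolding k_def by (simp add: field_simps)
  have ka': "k * (4 * cl_Q a) * (4 * cl_Q b) = 1" using ka by (simp add: algebra_simps)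
  have Ka: "cl_mult a (cl_mult (cl_prime a) (cl_mult a z)) = cl_scale (4 * cl_Q a) (cl_mult a z)" for z
    using key[OF assms(3)] by (metis assoc ms_l)
  have Kb: "cl_mult z (cl_mult b (cl_mult (cl_prime b) b)) = cl_scale (4 * cl_Q b) (cl_mult z b)" for z
    using key[OF assms(4)] by (metis assoc ms_r)
  have main: "cl_scale k (cl_mult (cl_mult (cl_mult (cl_mult a (cl_prime a)) (cl_mult (cl_mult a x) b)) (cl_prime b)) b)
     = cl_mult (cl_mult a x) b" for x
  proof -
    have "cl_scale k (cl_mult (cl_mult (cl_mult (cl_mult a (cl_prime a)) (cl_mult (cl_mult a x) b)) (cl_prime b)) b)
      = cl_scale (k * (4 * cl_Q a * (4 * cl_Q b))) (cl_mult (cl_mult a x) b)"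
      by (simp add: assoc Ka Kb ms_l ms_r ss mult.assoc mult.left_commute)
    moreover have "k * (16 * (cl_Q a * cl_Q b)) = 1" using qa qb unfolding k_def by simp
    ultimately show ?thesis by (simp add: s1)
  qed
  have part1: "(\<exists>x. cl_mult (cl_mult a x) b = d) \<longleftrightarrow>
      cl_scale k (cl_mult (cl_mult (cl_mult (cl_mult a (cl_prime a)) d) (cl_prime b)) b) = d"
  proof
    assume "\<exists>x. cl_mult (cl_mult a x) b = d"
    then obtain x where "cl_mult (cl_mult a x) b = d" by blast
    then show "cl_scale k (cl_mult (cl_mult (cl_mult (cl_mult a (cl_prime a)) d) (cl_prime b)) b) = d"
      using main[of x] by simp
  next
    assume h: "cl_scale k (cl_mult (cl_mult (cl_mult (cl_mult a (cl_prime a)) d) (cl_prime b)) b) = d"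
    show "\<exists>x. cl_mult (cl_mult a x) b = d"
    proof
      have eq: "cl_mult (cl_mult a (cl_scale k (cl_mult (cl_mult (cl_prime a) d) (cl_prime b)))) b
        = cl_scale k (cl_mult (cl_mult (cl_mult (cl_mult a (cl_prime a)) d) (cl_prime b)) b)"
        by (simp add: ms_l ms_r assoc)
      show "cl_mult (cl_mult a (cl_scale k (cl_mult (cl_mult (cl_prime a) d) (cl_prime b)))) b = d"
        using trans[OF eq h] .
    qed
  qed
  have part2: "{x. cl_mult (cl_mult a x) b = d} =
           {cl_sub (cl_add (cl_scale k (cl_mult (cl_mult (cl_prime a) d) (cl_prime b))) y)
                   (cl_scale k (cl_mult (cl_mult (cl_mult (cl_mult (cl_prime a) a) y) b) (cl_prime b)))
            | y. True}" if ex: "\<exists>x. cl_mult (cl_mult a x) b = d"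
  proof -
    have hd: "cl_scale k (cl_mult (cl_mult (cl_mult (cl_mult a (cl_prime a)) d) (cl_prime b)) b) = d"
      using part1 ex by blast
    show ?thesis
    proof (intro set_eqI iffI)
      fix x assume "x \<in> {x. cl_mult (cl_mult a x) b = d}"
      then have dx: "d = cl_mult (cl_mult a x) b" by simp
      have "cl_mult (cl_mult (cl_prime a) d) (cl_prime b) = cl_mult (cl_mult (cl_mult (cl_mult (cl_prime a) a) x) b) (cl_prime b)"
        by (simp add: dx assoc)
      then show "x \<in> {cl_sub (cl_add (cl_scale k (cl_mult (cl_mult (cl_prime a) d) (cl_prime b))) y)
                   (cl_scale k (cl_mult (cl_mult (cl_mult (cl_mult (cl_prime a) a) y) b) (cl_prime b)))
            | y. True}"
        by (auto intro!: exI[of _ x] simp: addsub)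
    next
      fix x assume "x \<in> {cl_sub (cl_add (cl_scale k (cl_mult (cl_mult (cl_prime a) d) (cl_prime b))) y)
                   (cl_scale k (cl_mult (cl_mult (cl_mult (cl_mult (cl_prime a) a) y) b) (cl_prime b)))
            | y. True}"
      then obtain y where x: "x = cl_sub (cl_add (cl_scale k (cl_mult (cl_mult (cl_prime a) d) (cl_prime b))) y)
                   (cl_scale k (cl_mult (cl_mult (cl_mult (cl_mult (cl_prime a) a) y) b) (cl_prime b)))" by blast
      have e1: "cl_mult (cl_mult a (cl_scale k (cl_mult (cl_mult (cl_prime a) d) (cl_prime b)))) b = d"
        by (rule trans[OF _ hd]) (simp add: ms_l ms_r assoc)
      have e2: "cl_mult (cl_mult a (cl_scale k (cl_mult (cl_mult (cl_mult (cl_mult (cl_prime a) a) y) b) (cl_prime b)))) b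
          = cl_mult (cl_mult a y) b"
        using main[of y] by (simp add: ms_l ms_r assoc)
      show "x \<in> {x. cl_mult (cl_mult a x) b = d}"
        using e1 e2 by (simp add: x msub_l msub_r madd_l madd_r addsub)
    qed
  qed
  show ?thesis using part1 part2 unfolding k_def by blast
qed
end
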